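(* Let $\Omega\subset\mathbb{R}^{N}$ ($N>1$) be a bounded smooth domain and, for $p>1$, let $\phi_p$ denote the $p$-torsion function of $\Omega$. Let $\varphi$ be a nonnegative function on $\Omega$ which belongs to $W_0^{1,p}(\Omega)$ for all $p>1$ sufficiently close to $1$, and such that $\int_\Omega|\nabla\varphi|\,dx>0$. Then \[ \liminf_{p\to1^{+}}\|\phi_p\|_{L^1(\Omega)}^{\,p-1}\ \ge\ \frac{\int_\Omega\varphi\,dx}{\int_\Omega|\nabla\varphi|\,dx}. \]
   Context: For $p>1$, the $p$-torsion function $\phi_p$ of $\Omega$ is the (unique) weak solution $\phi_p\in W_0^{1,p}(\Omega)$ of $-\Delta_p\phi_p=1$ in $\Omega$, $\phi_p=0$ on $\partial\Omega$, where $\Delta_p u=\operatorname{div}(|\nabla u|^{p-2}\nabla u)$; i.e. $\int_\Omega|\nabla\phi_p|^{p-2}\nabla\phi_p\cdot\nabla v\,dx=\int_\Omega v\,dx$ for all $v\in W_0^{1,p}(\Omega)$. It is positive in $\Omega$ and belongs to $C^{1,\beta}(\overline\Omega)$. *)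

theory Defs
  imports "HOL-Analysis.Analysis"
begin

definition pd :: "'n::finite \<Rightarrow> (real^'n \<Rightarrow> real) \<Rightarrow> real^'n \<Rightarrow> real" where
  "pd i f x = deriv (\<lambda>t. f (x + t *\<^sub>R axis i 1)) 0"

fun iter_pd :: "'n::finite list \<Rightarrow> (real^'n \<Rightarrow> real) \<Rightarrow> real^'n \<Rightarrow> real" where
  "iter_pd [] f = f"
| "iter_pd (i # is) f = pd i (iter_pd is f)"

definition smooth_fun :: "(real^'n::finite \<Rightarrow> real) \<Rightarrow> bool" where
  "smooth_fun f \<longleftrightarrow>
     (\<forall>is. continuous_on UNIV (iter_pd is f) \<and>
        (\<forall>i x. (\<lambda>t. iter_pd is f (x + t *\<^sub>R axis i 1)) differentiable (at 0)))"

definition grad :: "(real^'n::finite \<Rightarrow> real) \<Rightarrow> real^'n \<Rightarrow> real^'n" where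
  "grad f x = (\<chi> i. pd i f x)"

definition smooth_bounded_domain :: "(real^'n::finite) set \<Rightarrow> bool" where
  "smooth_bounded_domain \<Omega> \<longleftrightarrow> bounded \<Omega> \<and> open \<Omega> \<and> connected \<Omega> \<and> \<Omega> \<noteq> {} \<and>
     (\<exists>\<rho>. smooth_fun \<rho> \<and> \<Omega> = {x. \<rho> x < 0} \<and> (\<forall>x. \<rho> x = 0 \<longrightarrow> grad \<rho> x \<noteq> 0))"

definition test_fun :: "(real^'n::finite) set \<Rightarrow> (real^'n \<Rightarrow> real) \<Rightarrow> bool" where
  "test_fun \<Omega> \<psi> \<longleftrightarrow> smooth_fun \<psi> \<and>
     compact (closure {x. \<psi> x \<noteq> 0}) \<and> closure {x. \<psi> x \<noteq> 0} \<subseteq> \<Omega>"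

definition weak_grad :: "(real^'n::finite) set \<Rightarrow> (real^'n \<Rightarrow> real) \<Rightarrow> (real^'n \<Rightarrow> real^'n) \<Rightarrow> bool" where
  "weak_grad \<Omega> u G \<longleftrightarrow>
     (\<forall>K. compact K \<and> K \<subseteq> \<Omega> \<longrightarrow> set_integrable lebesgue K u \<and> set_integrable lebesgue K G) \<and>
     (\<forall>\<psi> i. test_fun \<Omega> \<psi> \<longrightarrow>
        (LINT x:\<Omega>|lebesgue. u x * pd i \<psi> x) = - (LINT x:\<Omega>|lebesgue. G x $ i * \<psi> x))"

definition W01p :: "(real^'n::finite) set \<Rightarrow> real \<Rightarrow> (real^'n \<Rightarrow> real) \<Rightarrow> (real^'n \<Rightarrow> real^'n) \<Rightarrow> bool" where
  "W01p \<Omega> p u G \<longleftrightarrow>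
     weak_grad \<Omega> u G \<and>
     set_borel_measurable lebesgue \<Omega> u \<and> set_borel_measurable lebesgue \<Omega> G \<and>
     set_integrable lebesgue \<Omega> (\<lambda>x. \<bar>u x\<bar> powr p) \<and>
     set_integrable lebesgue \<Omega> (\<lambda>x. norm (G x) powr p) \<and>
     (\<exists>\<psi>. (\<forall>k. test_fun \<Omega> (\<psi> k)) \<and>
        (\<lambda>k. LINT x:\<Omega>|lebesgue. \<bar>\<psi> k x - u x\<bar> powr p) \<longlonglongrightarrow> 0 \<and>
        (\<lambda>k. LINT x:\<Omega>|lebesgue. norm (grad (\<psi> k) x - G x) powr p) \<longlonglongrightarrow> 0)"

text \<open>phi (with weak gradient G) is the p-torsion function of Omega:
  weak solution in W_0^{1,p} of -Delta_p phi = 1.\<close>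
definition p_torsion :: "(real^'n::finite) set \<Rightarrow> real \<Rightarrow> (real^'n \<Rightarrow> real) \<Rightarrow> (real^'n \<Rightarrow> real^'n) \<Rightarrow> bool" where
  "p_torsion \<Omega> p \<phi> G \<longleftrightarrow> W01p \<Omega> p \<phi> G \<and>
     (\<forall>v Gv. W01p \<Omega> p v Gv \<longrightarrow>
        (LINT x:\<Omega>|lebesgue. norm (G x) powr (p - 2) * (G x \<bullet> Gv x)) = (LINT x:\<Omega>|lebesgue. v x))"

end

theory Submission
  imports Defs
begin

lemma young_w:
  fixes x y \<alpha> \<beta> :: real
  assumes "0 \<le> \<alpha>" "0 \<le> \<beta>" "\<alpha>+\<beta> = 1" "x \<ge> 0" "y \<ge> 0"
  shows "x powr \<alpha> * y powr \<beta> \<le> \<alpha>*x + \<beta>*y"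
proof (cases "x = 0 \<or> y = 0")
  case True then show ?thesis using assms by auto
next
  case False then show ?thesis using Youngs_inequality_0[of \<alpha> \<beta> x y] assms by auto
qed

lemma holder_aux:
  fixes a b :: "'a \<Rightarrow> real" and p :: real
  assumes p: "p > 1"
    and [measurable]: "a \<in> borel_measurable M" "b \<in> borel_measurable M"
    and nn: "\<And>x. x \<in> space M \<Longrightarrow> a x \<ge> 0" "\<And>x. x \<in> space M \<Longrightarrow> b x \<ge> 0"
    and ia: "integrable M (\<lambda>x. a x powr p)" and ib: "integrable M (\<lambda>x. b x powr p)"
  shows "integrable M (\<lambda>x. a x powr (p-1) * b x)"
    "(\<integral>x. a x powr (p-1) * b x \<partial>M) \<le> (\<integral>x. a x powr p \<partial>M) powr ((p-1)/p) * (\<integral>x. b x powr p \<partial>M) powr (1/p)"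
proof -
  define \<alpha> where "\<alpha> = (p-1)/p"
  define \<beta> where "\<beta> = 1/p"
  have ab: "0 \<le> \<alpha>" "0 \<le> \<beta>" "\<alpha> + \<beta> = 1" using p by (auto simp: \<alpha>_def \<beta>_def field_simps)
  have key: "(u powr p) powr \<alpha> * (v powr p) powr \<beta> = u powr (p-1) * v" if "u \<ge> 0" "v \<ge> 0" for u v
  proof -
    have "(u powr p) powr \<alpha> = u powr (p-1)" using p that by (simp add: powr_powr \<alpha>_def)
    moreover have "(v powr p) powr \<beta> = v" using p that by (simp add: powr_powr \<beta>_def)
    ultimately show ?thesis by simp
  qed
  have pw: "a x powr (p-1) * b x \<le> \<alpha> * a x powr p + \<beta> * b x powr p" if "x \<in> space M" for x
    using young_w[OF ab, of "a x powr p" "b x powr p"] key[of "a x" "b x"] nn[OF that] by simp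
  show int: "integrable M (\<lambda>x. a x powr (p-1) * b x)"
  proof (rule Bochner_Integration.integrable_bound[of _ "\<lambda>x. \<alpha> * a x powr p + \<beta> * b x powr p"])
    show "integrable M (\<lambda>x. \<alpha> * a x powr p + \<beta> * b x powr p)" using ia ib by auto
    show "(\<lambda>x. a x powr (p-1) * b x) \<in> borel_measurable M" by measurable
    show "AE x in M. norm (a x powr (p-1) * b x) \<le> norm (\<alpha> * a x powr p + \<beta> * b x powr p)"
    proof (rule AE_I2)
      fix x assume x: "x \<in> space M"
      have "0 \<le> a x powr (p-1) * b x" using nn[OF x] by simp
      then show "norm (a x powr (p-1) * b x) \<le> norm (\<alpha> * a x powr p + \<beta> * b x powr p)"
        using pw[OF x] by simp
    qed
  qed
  define A where "A = (\<integral>x. a x powr p \<partial>M)"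
  define B where "B = (\<integral>x. b x powr p \<partial>M)"
  have A0: "A \<ge> 0" "B \<ge> 0" unfolding A_def B_def by auto
  show "(\<integral>x. a x powr (p-1) * b x \<partial>M) \<le> A powr ((p-1)/p) * B powr (1/p)"
  proof (cases "A = 0 \<or> B = 0")
    case True
    have "AE x in M. a x powr (p-1) * b x = 0"
    proof (cases "A = 0")
      case True
      then have "AE x in M. a x powr p = 0"
        using integral_nonneg_eq_0_iff_AE[OF ia] nn unfolding A_def by auto
      then show ?thesis by eventually_elim (use p in auto)
    next
      case False
      with True have "B = 0" by auto
      then have "AE x in M. b x powr p = 0"
        using integral_nonneg_eq_0_iff_AE[OF ib] nn unfolding B_def by auto
      then show ?thesis by eventually_elim (use p in auto)
    qed
    then have "(\<integral>x. a x powr (p-1) * b x \<partial>M) = 0"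
      by (simp add: integral_eq_zero_AE)
    then show ?thesis by simp
  next
    case False
    with A0 have Ap: "A > 0" "B > 0" by auto
    have pw2: "a x powr (p-1) * b x / (A powr \<alpha> * B powr \<beta>) \<le> \<alpha> * (a x powr p / A) + \<beta> * (b x powr p / B)"
      if "x \<in> space M" for x
    proof -
      have "(a x powr p / A) powr \<alpha> * (b x powr p / B) powr \<beta> \<le> \<alpha> * (a x powr p / A) + \<beta> * (b x powr p / B)"
        using young_w[OF ab, of "a x powr p / A" "b x powr p / B"] Ap by simp
      moreover have "(a x powr p / A) powr \<alpha> * (b x powr p / B) powr \<beta> = a x powr (p-1) * b x / (A powr \<alpha> * B powr \<beta>)"
        using key[of "a x" "b x"] nn[OF that] Ap by (simp add: powr_divide)
      ultimately show ?thesis by simp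
    qed
    have "(\<integral>x. a x powr (p-1) * b x / (A powr \<alpha> * B powr \<beta>) \<partial>M) \<le> (\<integral>x. \<alpha> * (a x powr p / A) + \<beta> * (b x powr p / B) \<partial>M)"
      by (rule integral_mono) (use int ia ib pw2 in auto)
    also have "\<dots> = \<alpha> * (A / A) + \<beta> * (B / B)"
      using ia ib by (simp add: A_def B_def)
    also have "\<dots> = 1" using Ap ab by simp
    finally have "(\<integral>x. a x powr (p-1) * b x \<partial>M) / (A powr \<alpha> * B powr \<beta>) \<le> 1" by simp
    then show ?thesis using Ap by (simp add: \<alpha>_def \<beta>_def)
  qed
qed

lemma core_ineq:
  fixes Gf Gp :: "'a \<Rightarrow> real^'n" and f :: "'a \<Rightarrow> real" and p I :: real
  assumes p: "p > 1"
    and [measurable]: "Gf \<in> borel_measurable M" "Gp \<in> borel_measurable M"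
    and ia: "integrable M (\<lambda>x. norm (Gf x) powr p)" and ib: "integrable M (\<lambda>x. norm (Gp x) powr p)"
    and eqA: "(\<integral>x. norm (Gf x) powr (p-2) * (Gf x \<bullet> Gf x) \<partial>M) = (\<integral>x. f x \<partial>M)"
    and eqB: "(\<integral>x. norm (Gf x) powr (p-2) * (Gf x \<bullet> Gp x) \<partial>M) = I"
    and I0: "I \<ge> 0"
  shows "I powr p \<le> (\<integral>x. \<bar>f x\<bar> \<partial>M) powr (p-1) * (\<integral>x. norm (Gp x) powr p \<partial>M)"
proof -
  define A where "A = (\<integral>x. norm (Gf x) powr p \<partial>M)"
  define B where "B = (\<integral>x. norm (Gp x) powr p \<partial>M)"
  define S where "S = (\<integral>x. \<bar>f x\<bar> \<partial>M)"
  have pp: "norm v powr (p-2) * (v \<bullet> v) = norm v powr p" for v :: "real^'n"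
  proof (cases "v = 0")
    case False
    then have n: "norm v > 0" by simp
    have "norm v powr (p-2) * (v \<bullet> v) = norm v powr (p-2) * norm v powr 2"
    proof -
      have "norm v powr 2 = (norm v)^2" using n by (simp add: powr_numeral)
      then show ?thesis by (simp add: power2_norm_eq_inner)
    qed
    also have "\<dots> = norm v powr p" by (simp only: powr_add[symmetric]) simp
    finally show ?thesis .
  qed simp
  have AS: "A \<le> S"
  proof -
    have "A = (\<integral>x. f x \<partial>M)" using eqA by (simp add: A_def pp)
    also have "\<dots> \<le> S"
    proof (cases "integrable M f")
      case True then show ?thesis unfolding S_def by (intro integral_mono) auto
    next
      case False then show ?thesis unfolding S_def by (simp add: not_integrable_integral_eq)
    qed
    finally show ?thesis .
  qed
  have A0: "A \<ge> 0" "B \<ge> 0" unfolding A_def B_def by auto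
  note H = holder_aux[OF p, of "\<lambda>x. norm (Gf x)" M "\<lambda>x. norm (Gp x)"]
  have J: "integrable M (\<lambda>x. norm (Gf x) powr (p-1) * norm (Gp x))"
     "(\<integral>x. norm (Gf x) powr (p-1) * norm (Gp x) \<partial>M) \<le> A powr ((p-1)/p) * B powr (1/p)"
    using H ia ib by (auto simp: A_def B_def)
  have "I \<le> (\<integral>x. norm (Gf x) powr (p-1) * norm (Gp x) \<partial>M)"
    unfolding eqB[symmetric]
  proof (rule integral_mono')
    show "integrable M (\<lambda>x. norm (Gf x) powr (p-1) * norm (Gp x))" by (rule J)
    fix x
    show "0 \<le> norm (Gf x) powr (p-1) * norm (Gp x)" by simp
    show "norm (Gf x) powr (p-2) * (Gf x \<bullet> Gp x) \<le> norm (Gf x) powr (p-1) * norm (Gp x)"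
    proof (cases "Gf x = 0")
      case False
      then have n: "norm (Gf x) > 0" by simp
      have "norm (Gf x) powr (p-2) * (Gf x \<bullet> Gp x) \<le> norm (Gf x) powr (p-2) * (norm (Gf x) * norm (Gp x))"
        by (intro mult_left_mono norm_cauchy_schwarz) simp
      also have "\<dots> = (norm (Gf x) powr (p-2) * norm (Gf x) powr 1) * norm (Gp x)"
        using n by simp
      also have "\<dots> = norm (Gf x) powr (p-1) * norm (Gp x)"
        by (simp only: powr_add[symmetric]) simp
      finally show ?thesis .
    qed simp
  qed
  also have "\<dots> \<le> A powr ((p-1)/p) * B powr (1/p)" by (rule J)
  finally have IJ: "I \<le> A powr ((p-1)/p) * B powr (1/p)" .
  have "I powr p \<le> (A powr ((p-1)/p) * B powr (1/p)) powr p"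
    using IJ I0 p by (intro powr_mono2) auto
  also have "\<dots> = A powr (p-1) * B"
    using A0 p by (simp add: powr_mult powr_powr)
  also have "\<dots> \<le> S powr (p-1) * B"
    using AS A0 p by (intro mult_right_mono powr_mono2) auto
  finally show ?thesis by (simp add: S_def B_def)
qed

lemma pow_interp:
  fixes t p p1 :: real
  assumes "t \<ge> 0" "1 < p" "p < p1"
  shows "t powr p \<le> (1 - (p-1)/(p1-1)) * t + (p-1)/(p1-1) * t powr p1"
proof -
  define l where "l = (p-1)/(p1-1)"
  have l: "0 \<le> l" "l \<le> 1" using assms by (auto simp: l_def field_simps)
  have e1: "(p1 - 1) * l = p - 1" using assms by (simp add: l_def)
  have e: "(1 - l) + p1 * l = p" using e1 by (simp add: algebra_simps)
  have "t powr (1-l) * (t powr p1) powr l \<le> (1-l) * t + l * t powr p1"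
    using young_w[of "1-l" l t "t powr p1"] l assms by simp
  moreover have "t powr (1-l) * (t powr p1) powr l = t powr p"
    using e by (simp add: powr_powr powr_add[symmetric])
  ultimately show ?thesis by (simp add: l_def)
qed

theorem lemma1:
  fixes \<Omega> :: "(real^'n) set"
    and \<phi> :: "real \<Rightarrow> real^'n \<Rightarrow> real" and G\<phi> :: "real \<Rightarrow> real^'n \<Rightarrow> real^'n"
    and \<psi> :: "real^'n \<Rightarrow> real" and G :: "real^'n \<Rightarrow> real^'n"
  assumes "CARD('n) \<ge> 2"
    and "smooth_bounded_domain \<Omega>"
    and "\<forall>p>1. p_torsion \<Omega> p (\<phi> p) (G\<phi> p)"
    and "\<forall>x\<in>\<Omega>. \<psi> x \<ge> 0"
    and "\<exists>p0>1. \<forall>p. 1 < p \<and> p < p0 \<longrightarrow> W01p \<Omega> p \<psi> G"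
    and "(LINT x:\<Omega>|lebesgue. norm (G x)) > 0"
  shows "ereal ((LINT x:\<Omega>|lebesgue. \<psi> x) / (LINT x:\<Omega>|lebesgue. norm (G x)))
           \<le> Liminf (at_right 1) (\<lambda>p. ereal ((LINT x:\<Omega>|lebesgue. \<bar>\<phi> p x\<bar>) powr (p - 1)))"
proof -
  have "open \<Omega>" using assms(2) unfolding smooth_bounded_domain_def by auto
  then have \<Omega>s: "\<Omega> \<in> sets lebesgue" by (simp add: borel_open sets_completionI_sets)
  define M where "M = restrict_space lebesgue \<Omega>"
  have sM: "space M = \<Omega>" by (simp add: M_def space_restrict_space)
  have \<Omega>s': "\<Omega> \<inter> space lebesgue \<in> sets lebesgue" using \<Omega>s by simp
  have cI: "(LINT x:\<Omega>|lebesgue. f x) = (\<integral>x. f x \<partial>M)" for f :: "real^'n \<Rightarrow> real"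
    by (simp add: M_def set_lebesgue_integral_def integral_restrict_space[OF \<Omega>s'])
  have cJ: "set_integrable lebesgue \<Omega> f = integrable M f" for f :: "real^'n \<Rightarrow> real"
    by (simp add: M_def set_integrable_eq[OF \<Omega>s'])
  have cM: "set_borel_measurable lebesgue \<Omega> F = (F \<in> borel_measurable M)" for F :: "real^'n \<Rightarrow> real^'n"
    by (simp add: M_def set_borel_measurable_def borel_measurable_restrict_space_iff[OF \<Omega>s'])
  obtain p0 where p0: "p0 > 1" "\<And>p. 1 < p \<Longrightarrow> p < p0 \<Longrightarrow> W01p \<Omega> p \<psi> G" using assms(5) by auto
  define p1 where "p1 = (1 + p0) / 2"
  have p1: "1 < p1" "p1 < p0" using p0 by (auto simp: p1_def)
  have Gm[measurable]: "G \<in> borel_measurable M" using p0(2)[OF p1] cM unfolding W01p_def by auto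
  have ip1: "integrable M (\<lambda>x. norm (G x) powr p1)" using p0(2)[OF p1] cJ unfolding W01p_def by auto
  define g1 where "g1 = (\<integral>x. norm (G x) \<partial>M)"
  define Bp1 where "Bp1 = (\<integral>x. norm (G x) powr p1 \<partial>M)"
  define I where "I = (\<integral>x. \<psi> x \<partial>M)"
  define S where "S = (\<lambda>p. (\<integral>x. \<bar>\<phi> p x\<bar> \<partial>M))"
  define D where "D = (\<lambda>p. (1 - (p-1)/(p1-1)) * g1 + (p-1)/(p1-1) * Bp1)"
  have g1: "g1 > 0" using assms(6) by (simp add: cI g1_def)
  then have ig1: "integrable M (\<lambda>x. norm (G x))" unfolding g1_def
    using not_integrable_integral_eq by fastforce
  have Bp1: "Bp1 \<ge> 0" unfolding Bp1_def by simp
  have I0: "I \<ge> 0" unfolding I_def by (rule Bochner_Integration.integral_nonneg) (use assms(4) sM in auto)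
  have ev: "eventually (\<lambda>p. ereal (I powr p / D p) \<le> ereal (S p powr (p - 1))) (at_right 1)"
  proof (rule eventually_at_rightI[OF _ p1(1)])
    fix p assume p: "p \<in> {1<..<p1}"
    then have p': "1 < p" "p < p0" "p < p1" using p1 by auto
    have W: "W01p \<Omega> p \<psi> G" using p0(2) p' by auto
    have T: "p_torsion \<Omega> p (\<phi> p) (G\<phi> p)" using assms(3) p' by auto
    then have Wf: "W01p \<Omega> p (\<phi> p) (G\<phi> p)" unfolding p_torsion_def by auto
    have eqA: "(\<integral>x. norm (G\<phi> p x) powr (p-2) * (G\<phi> p x \<bullet> G\<phi> p x) \<partial>M) = (\<integral>x. \<phi> p x \<partial>M)"
      using T Wf unfolding p_torsion_def by (auto simp: cI)
    have eqB: "(\<integral>x. norm (G\<phi> p x) powr (p-2) * (G\<phi> p x \<bullet> G x) \<partial>M) = I"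
      using T W unfolding p_torsion_def by (auto simp: cI I_def)
    have mf: "G\<phi> p \<in> borel_measurable M" using Wf cM unfolding W01p_def by auto
    have iA: "integrable M (\<lambda>x. norm (G\<phi> p x) powr p)" using Wf cJ unfolding W01p_def by auto
    have iB: "integrable M (\<lambda>x. norm (G x) powr p)" using W cJ unfolding W01p_def by auto
    have C: "I powr p \<le> S p powr (p-1) * (\<integral>x. norm (G x) powr p \<partial>M)"
      using core_ineq[OF p'(1) mf Gm iA iB eqA eqB I0] by (simp add: S_def)
    have BD: "(\<integral>x. norm (G x) powr p \<partial>M) \<le> D p"
    proof -
      have "(\<integral>x. norm (G x) powr p \<partial>M) \<le> (\<integral>x. (1 - (p-1)/(p1-1)) * norm (G x) + (p-1)/(p1-1) * norm (G x) powr p1 \<partial>M)"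
        by (rule integral_mono) (use iB ig1 ip1 pow_interp p' in auto)
      also have "\<dots> = D p" using ig1 ip1 by (simp add: D_def g1_def Bp1_def)
      finally show ?thesis .
    qed
    have Dpos: "D p > 0"
    proof -
      have "0 < (1 - (p-1)/(p1-1)) * g1" using p' g1 by (simp add: field_simps)
      moreover have "0 \<le> (p-1)/(p1-1) * Bp1" using p' Bp1 by simp
      ultimately show ?thesis by (simp add: D_def)
    qed
    have "I powr p \<le> S p powr (p-1) * D p"
      using C BD by (meson order_trans mult_left_mono powr_ge_zero)
    then show "ereal (I powr p / D p) \<le> ereal (S p powr (p - 1))"
      using Dpos by (simp add: divide_le_eq)
  qed
  have limD: "(D \<longlongrightarrow> g1) (at_right 1)"
  proof -
    have "(D \<longlongrightarrow> (1 - (1-1)/(p1-1)) * g1 + (1-1)/(p1-1) * Bp1) (at_right 1)"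
      unfolding D_def by (intro tendsto_intros) (use p1 in auto)
    then show ?thesis by simp
  qed
  have limI: "((\<lambda>p. I powr p) \<longlongrightarrow> I powr 1) (at_right 1)"
    by (rule tendsto_powr') (use I0 in auto)
  have "((\<lambda>p. I powr p / D p) \<longlongrightarrow> I powr 1 / g1) (at_right 1)"
    by (rule tendsto_divide[OF limI limD]) (use g1 in auto)
  then have "((\<lambda>p. ereal (I powr p / D p)) \<longlongrightarrow> ereal (I / g1)) (at_right 1)"
    using I0 by (intro tendsto_ereal) (cases "I = 0", auto)
  then have "Liminf (at_right 1) (\<lambda>p. ereal (I powr p / D p)) = ereal (I / g1)"
    by (intro lim_imp_Liminf) auto
  moreover have "Liminf (at_right 1) (\<lambda>p. ereal (I powr p / D p)) \<le> Liminf (at_right 1) (\<lambda>p. ereal (S p powr (p - 1)))"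
    by (rule Liminf_mono[OF ev])
  ultimately show ?thesis by (simp add: cI I_def g1_def S_def)
qed

end
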